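(* Let $n,m\in\mathbb N$ and $\tau_{-n+1},\dots,\tau_{n-1}\in M_m(\mathbb C)$, and let $T\in M_n(M_m(\mathbb C))$ be the block Toeplitz matrix whose $(i,j)$ block is $\tau_{i-j}$ ($0\le i,j\le n-1$). The following are equivalent: (1) $T$ is positive semidefinite; (2) for every function $F:S^1\to M_m(\mathbb C)$ of the form $F(z)=\sum_{k=-n+1}^{n-1}a_kz^k$ with $a_k\in M_m(\mathbb C)$ such that $F(z)$ is positive semidefinite for every $z\in S^1$, the matrix $\sum_{k=-n+1}^{n-1}\tau_{-k}\circ a_k$ is positive semidefinite.
   Context: $S^1$ is the unit circle; $a\circ b$ denotes the Schur–Hadamard (entrywise) product of $m\times m$ matrices. *)

theory Defs
  imports "HOL-Analysis.Analysis"
begin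

text \<open>An m x m complex matrix is represented as a function nat => nat => complex;
  only the entries with indices below m are relevant.\<close>

type_synonym cmat = "nat \<Rightarrow> nat \<Rightarrow> complex"

definition psd :: "nat \<Rightarrow> cmat \<Rightarrow> bool" where
  "psd m A \<longleftrightarrow>
     (\<forall>i<m. \<forall>j<m. A j i = cnj (A i j)) \<and>
     (\<forall>v :: nat \<Rightarrow> complex.
        let q = (\<Sum>i<m. \<Sum>j<m. cnj (v i) * A i j * v j) in Im q = 0 \<and> 0 \<le> Re q)"

text \<open>The block Toeplitz matrix T in M_n(M_m(C)) with (i,j) block tau (i - j),
  identified with an (n*m) x (n*m) complex matrix: row index i*m+p,
  column index j*m+q (0 <= p,q < m).\<close>
definition block_toeplitz :: "nat \<Rightarrow> (int \<Rightarrow> cmat) \<Rightarrow> cmat" where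
  "block_toeplitz m \<tau> = (\<lambda>r c. \<tau> (int (r div m) - int (c div m)) (r mod m) (c mod m))"

definition schur :: "cmat \<Rightarrow> cmat \<Rightarrow> cmat" where
  "schur A B = (\<lambda>i j. A i j * B i j)"

definition idx :: "nat \<Rightarrow> int set" where
  "idx n = {- int n + 1 .. int n - 1}"

definition trig_poly :: "nat \<Rightarrow> (int \<Rightarrow> cmat) \<Rightarrow> complex \<Rightarrow> cmat" where
  "trig_poly n a z = (\<lambda>i j. \<Sum>k\<in>idx n. a k i j * z powi k)"

end

theory Submission
  imports Defs
begin

definition ip :: "nat \<Rightarrow> (nat \<Rightarrow> complex) \<Rightarrow> (nat \<Rightarrow> complex) \<Rightarrow> complex" where
  "ip D x y = (\<Sum>t<D. x t * cnj (y t))"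

definition qf :: "nat \<Rightarrow> cmat \<Rightarrow> (nat \<Rightarrow> complex) \<Rightarrow> complex" where
  "qf m A v = (\<Sum>i<m. \<Sum>j<m. cnj (v i) * A i j * v j)"

lemma psd_iff: "psd m A \<longleftrightarrow> (\<forall>i<m. \<forall>j<m. A j i = cnj (A i j)) \<and>
   (\<forall>v. Im (qf m A v) = 0 \<and> 0 \<le> Re (qf m A v))"
  unfolding psd_def qf_def Let_def by simp

lemma ip_conj: "ip D y x = cnj (ip D x y)"
  unfolding ip_def by (simp add: mult.commute)

lemma ip_self: "ip D x x = of_real (\<Sum>t<D. (cmod (x t))\<^sup>2)"
  unfolding ip_def of_real_sum by (rule sum.cong) (simp_all add: complex_norm_square[symmetric] del: of_real_power)

lemma ip_self_Im: "Im (ip D x x) = 0" and ip_self_Re: "0 \<le> Re (ip D x x)"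
  by (simp_all add: ip_self sum_nonneg)

lemma ip_self_zero: assumes "ip D x x = 0" "t < D" shows "x t = 0"
proof -
  have "(\<Sum>t<D. (cmod (x t))\<^sup>2) = 0" using assms(1) unfolding ip_self of_real_eq_0_iff .
  hence "\<forall>t\<in>{..<D}. (cmod (x t))\<^sup>2 = 0" by (subst sum_nonneg_eq_0_iff[symmetric]) auto
  thus ?thesis using assms(2) by auto
qed

lemma ip_zero_right: assumes "ip D x x = 0" shows "ip D y x = 0"
  unfolding ip_def using ip_self_zero[OF assms] by (auto intro!: sum.neutral)

lemma ip_sum_left: "ip D (\<lambda>t. \<Sum>k\<in>A. f k t) y = (\<Sum>k\<in>A. ip D (f k) y)"
  unfolding ip_def by (simp add: sum_distrib_right) (rule sum.swap)

lemma ip_sum_right: "ip D y (\<lambda>t. \<Sum>k\<in>A. f k t) = (\<Sum>k\<in>A. ip D y (f k))"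
  unfolding ip_def by (simp add: sum_distrib_left cnj_sum) (rule sum.swap)

lemma ip_scale_left: "ip D (\<lambda>t. c * x t) y = c * ip D x y"
  unfolding ip_def by (simp add: sum_distrib_left mult.assoc)

lemma ip_scale_right: "ip D x (\<lambda>t. c * y t) = cnj c * ip D x y"
  unfolding ip_def by (simp add: sum_distrib_left mult_ac)

lemma ip_diff_left: "ip D (\<lambda>t. x t - y t) z = ip D x z - ip D y z"
  unfolding ip_def by (simp add: left_diff_distrib sum_subtractf)

lemma ip_diff_right: "ip D z (\<lambda>t. x t - y t) = ip D z x - ip D z y"
  unfolding ip_def by (simp add: right_diff_distrib sum_subtractf)

lemma ip_add_left: "ip D (\<lambda>t. x t + y t) z = ip D x z + ip D y z"
  unfolding ip_def by (simp add: distrib_right sum.distrib)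

lemma ip_add_right: "ip D z (\<lambda>t. x t + y t) = ip D z x + ip D z y"
  unfolding ip_def by (simp add: distrib_left sum.distrib)

lemma gram_psd:
  assumes "\<forall>r<L. \<forall>c<L. A r c = ip D (X c) (X r)"
  shows "psd L A"
  unfolding psd_iff
proof (intro conjI allI impI)
  fix i j assume "i < L" "j < L"
  thus "A j i = cnj (A i j)" using assms by (simp add: ip_conj[of D "X j"])
next
  fix v
  define u where "u = (\<lambda>t. \<Sum>c<L. v c * X c t)"
  have "qf L A v = ip D u u"
  proof -
    have "qf L A v = (\<Sum>r<L. \<Sum>c<L. cnj (v r) * ip D (X c) (X r) * v c)"
      unfolding qf_def using assms by simp
    also have "\<dots> = (\<Sum>r<L. \<Sum>c<L. ip D (\<lambda>t. v c * X c t) (\<lambda>t. v r * X r t))"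
      by (simp add: ip_scale_left ip_scale_right mult_ac)
    also have "\<dots> = ip D u u"
      unfolding u_def ip_sum_left ip_sum_right by (rule sum.swap)
    finally show ?thesis .
  qed
  thus "Im (qf L A v) = 0" "0 \<le> Re (qf L A v)" by (simp_all add: ip_self_Im ip_self_Re)
qed

lemma sum_two_r:
  assumes "i < L" "j < L" "i \<noteq> j"
  fixes f :: "nat \<Rightarrow> complex"
  shows "(\<Sum>c<L. f c * (if c = i then \<alpha> else if c = j then \<beta> else 0)) = f i * \<alpha> + f j * \<beta>"
proof -
  have "(\<Sum>c<L. f c * (if c = i then \<alpha> else if c = j then \<beta> else 0)) =
        (\<Sum>c<L. (if c = i then f c * \<alpha> else 0) + (if c = j then f c * \<beta> else 0))"
    by (rule sum.cong) (use assms in auto)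
  also have "\<dots> = f i * \<alpha> + f j * \<beta>" using assms by (simp add: sum.distrib)
  finally show ?thesis .
qed

lemma sum_two_l:
  assumes "i < L" "j < L" "i \<noteq> j"
  fixes f :: "nat \<Rightarrow> complex"
  shows "(\<Sum>c<L. (if c = i then \<alpha> else if c = j then \<beta> else 0) * f c) = \<alpha> * f i + \<beta> * f j"
  using sum_two_r[OF assms, of f \<alpha> \<beta>] by (simp add: mult.commute[of _ "f _"])

lemma qf_two:
  assumes "i < L" "j < L" "i \<noteq> j"
  shows "qf L A (\<lambda>t. if t = i then \<alpha> else if t = j then \<beta> else 0) =
     cnj \<alpha> * A i i * \<alpha> + cnj \<alpha> * A i j * \<beta> + cnj \<beta> * A j i * \<alpha> + cnj \<beta> * A j j * \<beta>"
proof -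
  have e: "cnj (if t = i then \<alpha> else if t = j then \<beta> else 0) =
    (if t = i then cnj \<alpha> else if t = j then cnj \<beta> else 0)" for t by auto
  have "qf L A (\<lambda>t. if t = i then \<alpha> else if t = j then \<beta> else 0) =
     (\<Sum>r<L. (if r = i then cnj \<alpha> else if r = j then cnj \<beta> else 0) *
        (\<Sum>c<L. A r c * (if c = i then \<alpha> else if c = j then \<beta> else 0)))"
    unfolding qf_def e by (simp add: sum_distrib_left mult.assoc)
  also have "\<dots> = (\<Sum>r<L. (if r = i then cnj \<alpha> else if r = j then cnj \<beta> else 0) *
        (A r i * \<alpha> + A r j * \<beta>))"
    by (rule sum.cong[OF refl], subst sum_two_r[OF assms]) simp
  also have "\<dots> = cnj \<alpha> * (A i i * \<alpha> + A i j * \<beta>) + cnj \<beta> * (A j i * \<alpha> + A j j * \<beta>)"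
    by (rule sum_two_l[OF assms])
  finally show ?thesis by (simp add: algebra_simps)
qed

lemma qf_one:
  assumes "i < L"
  shows "qf L A (\<lambda>t. if t = i then 1 else 0) = A i i"
proof -
  have "qf L A (\<lambda>t. if t = i then 1 else 0) = (\<Sum>r<L. (if r = i then 1 else 0) *
        (\<Sum>c<L. A r c * (if c = i then 1 else 0)))"
    unfolding qf_def by (simp add: sum_distrib_left mult.assoc if_distrib[of cnj] cong: if_cong)
  also have "\<dots> = (\<Sum>r<L. if r = i then A r i else 0)"
    by (rule sum.cong[OF refl]) (simp add: mult_ac if_distrib[of "\<lambda>x. _ * x"] sum.delta cong: if_cong)
  also have "\<dots> = A i i" using assms by simp
  finally show ?thesis .
qed

lemma real_form_herm:
  assumes "\<forall>v. Im (qf L A v) = 0" "i < L" "j < L"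
  shows "A j i = cnj (A i j)"
proof (cases "i = j")
  case True
  have "Im (A i i) = 0" using assms(1)[rule_format, of "\<lambda>t. if t = i then 1 else 0"] qf_one[OF assms(2)]
    by simp
  thus ?thesis using True by (simp add: complex_eq_iff)
next
  case False
  have ii: "Im (A i i) = 0" using assms(1)[rule_format, of "\<lambda>t. if t = i then 1 else 0"] qf_one[OF assms(2)]
    by simp
  have jj: "Im (A j j) = 0" using assms(1)[rule_format, of "\<lambda>t. if t = j then 1 else 0"] qf_one[OF assms(3)]
    by simp
  have 1: "Im (A i i + A i j + A j i + A j j) = 0"
    using assms(1)[rule_format, of "\<lambda>t. if t = i then 1 else if t = j then 1 else 0"]
      qf_two[OF assms(2,3) False, of A 1 1] by simp
  have 2: "Im (A i i + \<i> * A i j - \<i> * A j i + A j j) = 0"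
    using assms(1)[rule_format, of "\<lambda>t. if t = i then 1 else if t = j then \<i> else 0"]
      qf_two[OF assms(2,3) False, of A 1 \<i>] by (simp add: algebra_simps)
  show ?thesis using ii jj 1 2 by (simp add: complex_eq_iff)
qed

lemma psd_of_forms:
  assumes "\<forall>v. Im (qf L A v) = 0 \<and> 0 \<le> Re (qf L A v)"
  shows "psd L A"
  unfolding psd_iff using assms real_form_herm[of L A] by blast

lemma psd_diag:
  assumes "psd L A" "i < L"
  shows "Im (A i i) = 0" "0 \<le> Re (A i i)"
  using assms qf_one[OF assms(2), of A] unfolding psd_iff by metis+

lemma psd_herm:
  assumes "psd L A" "i < L" "j < L"
  shows "A j i = cnj (A i j)"
  using assms unfolding psd_iff by blast

lemma psd_zero_diag:
  assumes "psd L A" "i < L" "k < L" "A k k = 0"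
  shows "A i k = 0"
proof (rule ccontr)
  assume nz: "A i k \<noteq> 0"
  have "i \<noteq> k" using nz assms(4) by auto
  define r :: real where "r = (Re (A i i) + 1) / (2 * (cmod (A i k))\<^sup>2)"
  define \<beta> where "\<beta> = - of_real r * cnj (A i k)"
  have h: "A k i = cnj (A i k)" using psd_herm[OF assms(1,2,3)] .
  have "0 \<le> Re (qf L A (\<lambda>t. if t = i then 1 else if t = k then \<beta> else 0))"
    using assms(1) unfolding psd_iff by blast
  also have "qf L A (\<lambda>t. if t = i then 1 else if t = k then \<beta> else 0) =
     A i i + A i k * \<beta> + cnj \<beta> * A k i"
    using qf_two[OF assms(2,3) \<open>i \<noteq> k\<close>, of A 1 \<beta>] assms(4) by simp
  also have "A i k * \<beta> = - of_real r * of_real ((cmod (A i k))\<^sup>2)"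
    unfolding \<beta>_def complex_norm_square by simp
  also have "cnj \<beta> * A k i = - of_real r * of_real ((cmod (A i k))\<^sup>2)"
    unfolding \<beta>_def complex_norm_square h by simp
  finally have "0 \<le> Re (A i i) - 2 * r * (cmod (A i k))\<^sup>2" by simp
  moreover have "(cmod (A i k))\<^sup>2 > 0" using nz by simp
  ultimately show False unfolding r_def by (simp add: field_simps)
qed

lemma psd_gram:
  "psd N A \<Longrightarrow> \<exists>X. \<forall>i<N. \<forall>j<N. A i j = ip N (X j) (X i)"
proof (induction N arbitrary: A)
  case 0
  then show ?case by simp
next
  case (Suc N)
  note P = Suc.prems
  define a where "a = A N N"
  have aIm: "Im a = 0" and aRe: "0 \<le> Re a" using psd_diag[OF P, of N] a_def by auto
  have areal: "a = of_real (Re a)" using aIm by (simp add: complex_eq_iff)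
  have herm: "\<And>i j. i < Suc N \<Longrightarrow> j < Suc N \<Longrightarrow> A j i = cnj (A i j)"
    using psd_herm[OF P] by blast
  have zero: "A i N = 0" "A N i = 0" if "a = 0" "i < Suc N" for i
  proof -
    show "A i N = 0" using psd_zero_diag[OF P that(2), of N] that a_def by simp
    then show "A N i = 0" using herm[of i N] that by simp
  qed
  define B where "B = (\<lambda>i j. A i j - A i N * A N j / a)"
  have "psd N B"
  proof (rule psd_of_forms, intro allI)
    fix v
    define c where "c = (\<Sum>j<N. A N j * v j)"
    define s where "s = - c / a"
    define w where "w = (\<lambda>t. if t < N then v t else s)"
    have c2: "(\<Sum>i<N. cnj (v i) * A i N) = cnj c"
    proof -
      have "A i N = cnj (A N i)" if "i < N" for i using herm[of N i] that by simp
      then show ?thesis unfolding c_def cnj_sum by (intro sum.cong) (auto simp: mult.commute)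
    qed
    have qB: "qf N B v = qf N A v - cnj c * c / a"
    proof -
      have "qf N B v = qf N A v - (\<Sum>i<N. \<Sum>j<N. (cnj (v i) * A i N) * (A N j * v j) / a)"
        unfolding qf_def B_def by (simp add: algebra_simps sum_subtractf)
      also have "(\<Sum>i<N. \<Sum>j<N. (cnj (v i) * A i N) * (A N j * v j) / a) = cnj c * c / a"
        unfolding c2[symmetric] unfolding c_def sum_divide_distrib sum_distrib_left sum_distrib_right
        by (simp add: mult.assoc) (rule sum.swap)
      finally show ?thesis .
    qed
    have qA: "qf (Suc N) A w = qf N A v + cnj s * c + cnj c * s + cnj s * a * s"
    proof -
      have "qf (Suc N) A w = (\<Sum>i<N. \<Sum>j<N. cnj (v i) * A i j * v j) + (\<Sum>i<N. cnj (v i) * A i N * s)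
          + (\<Sum>j<N. cnj s * A N j * v j) + cnj s * A N N * s"
        unfolding qf_def w_def by (simp add: sum.distrib)
      also have "(\<Sum>i<N. cnj (v i) * A i N * s) = cnj c * s"
        unfolding c2[symmetric] by (simp add: sum_distrib_right)
      also have "(\<Sum>j<N. cnj s * A N j * v j) = cnj s * c"
        unfolding c_def by (simp add: sum_distrib_left mult.assoc)
      finally show ?thesis unfolding qf_def a_def by simp
    qed
    have key: "qf N B v = qf (Suc N) A w"
    proof (cases "a = 0")
      case True
      then show ?thesis unfolding qA qB s_def by simp
    next
      case False
      have ca: "cnj a = a" using areal by (metis complex_cnj_complex_of_real)
      have cs': "cnj s = - cnj c / a" unfolding s_def using ca by simp
      show ?thesis unfolding qA qB cs' unfolding s_def using False
        by (simp add: field_simps power2_eq_square)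
    qed
    show "Im (qf N B v) = 0 \<and> 0 \<le> Re (qf N B v)"
      unfolding key using P unfolding psd_iff by blast
  qed
  then obtain Y where Y: "\<forall>i<N. \<forall>j<N. B i j = ip N (Y j) (Y i)" using Suc.IH by blast
  define \<sigma> where "\<sigma> = complex_of_real (sqrt (Re a))"
  have s2: "\<sigma> * \<sigma> = a"
  proof -
    have "sqrt (Re a) * sqrt (Re a) = Re a" using aRe by simp
    then have "\<sigma> * \<sigma> = of_real (Re a)" unfolding \<sigma>_def by (metis of_real_mult)
    then show ?thesis using areal by simp
  qed
  have cs: "cnj \<sigma> = \<sigma>" unfolding \<sigma>_def by simp
  define X where "X = (\<lambda>i t. if t = N then cnj (A i N) / \<sigma> else if i < N then Y i t else 0)"
  have ipX: "ip (Suc N) (X j) (X i) = (if i < N \<and> j < N then B i j else 0) + A i N * A N j / a"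
    if "i < Suc N" "j < Suc N" for i j
  proof -
    have "ip (Suc N) (X j) (X i) = ip N (X j) (X i) + X j N * cnj (X i N)"
      unfolding ip_def by simp
    also have "ip N (X j) (X i) = (if i < N \<and> j < N then B i j else 0)"
    proof (cases "i < N \<and> j < N")
      case True
      have "ip N (X j) (X i) = ip N (Y j) (Y i)" unfolding ip_def X_def using True by (intro sum.cong) auto
      then show ?thesis using Y True by simp
    next
      case False
      show ?thesis unfolding ip_def X_def using False by (auto intro!: sum.neutral)
    qed
    also have "X j N * cnj (X i N) = A i N * A N j / a"
    proof -
      have h: "cnj (A j N) = A N j" using herm[of j N] that by simp
      have "X j N * cnj (X i N) = cnj (A j N) * A i N / (\<sigma> * \<sigma>)"
        unfolding X_def by (simp add: cs)
      then show ?thesis unfolding h s2 by (simp add: mult.commute)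
    qed
    finally show ?thesis .
  qed
  show ?case
  proof (intro exI allI impI)
    fix i j assume ij: "i < Suc N" "j < Suc N"
    show "A i j = ip (Suc N) (X j) (X i)"
    proof (cases "a = 0")
      case True
      show ?thesis
      proof (cases "i < N \<and> j < N")
        case True
        then show ?thesis unfolding ipX[OF ij] B_def using \<open>a = 0\<close> by simp
      next
        case False
        then have "i = N \<or> j = N" using ij by auto
        then show ?thesis unfolding ipX[OF ij] using False zero[OF \<open>a = 0\<close>] ij by auto
      qed
    next
      case False
      show ?thesis
      proof (cases "i < N \<and> j < N")
        case True
        then show ?thesis unfolding ipX[OF ij] B_def by simp
      next
        case c: False
        then have "i = N \<or> j = N" using ij by auto
        then show ?thesis unfolding ipX[OF ij] using c False unfolding a_def by auto
      qed
    qed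
  qed
qed

lemma ip_decomp_right:
  fixes K :: nat
  assumes "\<And>t. z t = u t + (\<Sum>k<K. d k * w k t)"
  shows "ip D y z = ip D y u + (\<Sum>k<K. cnj (d k) * ip D y (w k))"
proof -
  have "z = (\<lambda>t. u t + (\<Sum>k<K. d k * w k t))" using assms by auto
  then show ?thesis by (simp add: ip_add_right ip_sum_right ip_scale_right)
qed

lemma proj_exists:
  fixes K :: nat and w :: "nat \<Rightarrow> nat \<Rightarrow> complex"
  shows "\<exists>c. \<forall>j<K. ip D (\<lambda>t. x t - (\<Sum>k<K. c k * w k t)) (w j) = 0"
proof (induction K arbitrary: x)
  case 0
  then show ?case by simp
next
  case (Suc K)
  obtain c where c: "\<forall>j<K. ip D (\<lambda>t. x t - (\<Sum>k<K. c k * w k t)) (w j) = 0"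
    using Suc.IH by blast
  obtain d where d: "\<forall>j<K. ip D (\<lambda>t. w K t - (\<Sum>k<K. d k * w k t)) (w j) = 0"
    using Suc.IH by blast
  define e where "e = (\<lambda>t. x t - (\<Sum>k<K. c k * w k t))"
  define w' where "w' = (\<lambda>t. w K t - (\<Sum>k<K. d k * w k t))"
  have wK: "w K t = w' t + (\<Sum>k<K. d k * w k t)" for t unfolding w'_def by simp
  show ?case
  proof (cases "ip D w' w' = 0")
    case True
    define c' where "c' = c(K := 0)"
    have s: "(\<lambda>t. x t - (\<Sum>k<Suc K. c' k * w k t)) = e"
      unfolding e_def c'_def by (auto intro!: sum.cong)
    show ?thesis
    proof (intro exI allI impI)
      fix j assume "j < Suc K"
      show "ip D (\<lambda>t. x t - (\<Sum>k<Suc K. c' k * w k t)) (w j) = 0"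
      proof (cases "j < K")
        case True
        then show ?thesis unfolding s e_def using c by simp
      next
        case False
        then have "j = K" using \<open>j < Suc K\<close> by simp
        have "ip D e (w K) = ip D e w' + (\<Sum>k<K. cnj (d k) * ip D e (w k))"
          by (rule ip_decomp_right[OF wK])
        also have "ip D e w' = 0" by (rule ip_zero_right[OF True])
        also have "(\<Sum>k<K. cnj (d k) * ip D e (w k)) = 0"
          using c unfolding e_def by simp
        finally show ?thesis unfolding s \<open>j = K\<close> by simp
      qed
    qed
  next
    case False
    define \<alpha> where "\<alpha> = ip D e w' / ip D w' w'"
    define c' where "c' = (\<lambda>k. if k < K then c k - \<alpha> * d k else \<alpha>)"
    have s: "(\<lambda>t. x t - (\<Sum>k<Suc K. c' k * w k t)) = (\<lambda>t. e t - \<alpha> * w' t)"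
    proof
      fix t
      have "(\<Sum>k<Suc K. c' k * w k t) = (\<Sum>k<K. (c k - \<alpha> * d k) * w k t) + \<alpha> * w K t"
        unfolding c'_def by simp
      also have "\<dots> = (\<Sum>k<K. c k * w k t) + \<alpha> * w' t"
        unfolding w'_def by (simp add: algebra_simps sum_subtractf sum_distrib_left)
      finally show "x t - (\<Sum>k<Suc K. c' k * w k t) = e t - \<alpha> * w' t"
        unfolding e_def by simp
    qed
    have o1: "ip D (\<lambda>t. e t - \<alpha> * w' t) (w j) = 0" if "j < K" for j
      unfolding ip_diff_left ip_scale_left using c d that unfolding e_def w'_def by simp
    have o2: "ip D (\<lambda>t. e t - \<alpha> * w' t) w' = 0"
      unfolding ip_diff_left ip_scale_left \<alpha>_def using False by simp
    show ?thesis
    proof (intro exI allI impI)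
      fix j assume "j < Suc K"
      show "ip D (\<lambda>t. x t - (\<Sum>k<Suc K. c' k * w k t)) (w j) = 0"
      proof (cases "j < K")
        case True
        then show ?thesis unfolding s using o1 by simp
      next
        case False
        then have "j = K" using \<open>j < Suc K\<close> by simp
        show ?thesis unfolding s \<open>j = K\<close> ip_decomp_right[OF wK] o2 using o1 by simp
      qed
    qed
  qed
qed

definition gram :: "nat \<Rightarrow> nat \<Rightarrow> (int \<Rightarrow> cmat) \<Rightarrow> nat \<Rightarrow> (nat \<Rightarrow> nat \<Rightarrow> complex) \<Rightarrow> bool" where
  "gram m N \<tau> D X \<longleftrightarrow> (\<forall>r<N*m. \<forall>c<N*m. block_toeplitz m \<tau> r c = ip D (X c) (X r))"

lemma ip_split: "ip (2*D) f g = ip D f g + ip D (\<lambda>t. f (t + D)) (\<lambda>t. g (t + D))"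
proof -
  have "ip (2*D) f g = (\<Sum>t\<in>{0..<D+D}. f t * cnj (g t))"
    unfolding ip_def by (simp add: lessThan_atLeast0 mult_2)
  also have "\<dots> = (\<Sum>t\<in>{0..<D}. f t * cnj (g t)) + (\<Sum>t\<in>{0+D..<D+D}. f t * cnj (g t))"
    using sum.atLeastLessThan_concat[of 0 D "D+D" "\<lambda>t. f t * cnj (g t)"] by simp
  also have "(\<Sum>t\<in>{0+D..<D+D}. f t * cnj (g t)) = (\<Sum>t\<in>{0..<D}. f (t+D) * cnj (g (t+D)))"
    by (rule sum.shift_bounds_nat_ivl)
  finally show ?thesis unfolding ip_def by (simp add: lessThan_atLeast0)
qed

lemma ip_zero_fun_left: "ip D (\<lambda>t. 0) g = 0" and ip_zero_fun_right: "ip D f (\<lambda>t. 0) = 0"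
  unfolding ip_def by simp_all

lemma ip_cong: "(\<And>t. t < D \<Longrightarrow> f t = f' t) \<Longrightarrow> (\<And>t. t < D \<Longrightarrow> g t = g' t) \<Longrightarrow> ip D f g = ip D f' g'"
  unfolding ip_def by (intro sum.cong) auto

lemma bt_eq: "block_toeplitz m \<tau> r c = \<tau> (int (r div m) - int (c div m)) (r mod m) (c mod m)"
  unfolding block_toeplitz_def by simp

lemma decomp_idx:
  assumes "0 < (m::nat)" "r < Suc N * m"
  obtains i p where "r = i * m + p" "p < m" "i \<le> N"
proof -
  have "r = r div m * m + r mod m" by simp
  moreover have "r mod m < m" using assms by simp
  moreover have "r div m < Suc N" using assms by (simp add: div_less_iff_less_mult)
  ultimately show ?thesis using that by (metis less_Suc_eq_le)
qed

lemma extend: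
  assumes m: "0 < m" and N: "1 \<le> N" and G: "gram m N \<tau> D X"
  shows "\<exists>\<tau>'' D' Z. (\<forall>k. \<bar>k\<bar> < int N \<longrightarrow> \<tau>'' k = \<tau> k) \<and> gram m (Suc N) \<tau>'' D' Z"
proof -
  define K where "K = (N - 1) * m"
  have KN: "K + m = N * m" using N unfolding K_def by (cases N) auto
  have GX: "ip D (X c) (X r) = block_toeplitz m \<tau> r c" if "r < N*m" "c < N*m" for r c
    using G that unfolding gram_def by simp
  have shift: "ip D (X (c+m)) (X (r+m)) = ip D (X c) (X r)" if "r < K" "c < K" for r c
  proof -
    have "ip D (X (c+m)) (X (r+m)) = block_toeplitz m \<tau> (r+m) (c+m)"
      using GX[of "r+m" "c+m"] that KN by simp
    also have "\<dots> = block_toeplitz m \<tau> r c" unfolding bt_eq using m by simp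
    also have "\<dots> = ip D (X c) (X r)" using GX[of r c] that KN by simp
    finally show ?thesis .
  qed
  have "\<forall>q. \<exists>c. \<forall>j<K. ip D (\<lambda>t. X (K+q) t - (\<Sum>k<K. c k * X k t)) (X j) = 0"
    using proj_exists by blast
  then obtain cc where cc: "\<And>q j. j < K \<Longrightarrow> ip D (\<lambda>t. X (K+q) t - (\<Sum>k<K. cc q k * X k t)) (X j) = 0"
    by metis
  define y where "y = (\<lambda>q t. \<Sum>k<K. cc q k * X k t)"
  define e where "e = (\<lambda>q t. X (K+q) t - y q t)"
  define V where "V = (\<lambda>q t. \<Sum>k<K. cc q k * X (k+m) t)"
  have e_X: "ip D (e q) (X j) = 0" if "j < K" for q j
    using cc[OF that, of q] unfolding e_def y_def by simp
  have X_e: "ip D (X j) (e q) = 0" if "j < K" for q j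
    using e_X[OF that, of q] by (subst ip_conj) simp
  have e_y: "ip D (e q) (y p) = 0" for p q
    unfolding y_def ip_sum_right ip_scale_right using e_X by simp
  have y_e: "ip D (y p) (e q) = 0" for p q
    using e_y[of q p] by (subst ip_conj) simp
  have yX: "ip D (y q) (X j) = ip D (X (K+q)) (X j)" if "j < K" for q j
  proof -
    have "ip D (e q) (X j) = ip D (X (K+q)) (X j) - ip D (y q) (X j)"
      unfolding e_def by (rule ip_diff_left)
    then show ?thesis using e_X[OF that, of q] by simp
  qed
  have yy: "ip D (X (K+q)) (X (K+p)) = ip D (y q) (y p) + ip D (e q) (e p)" for p q
  proof -
    have "X (K+q) = (\<lambda>t. y q t + e q t)" "X (K+p) = (\<lambda>t. y p t + e p t)"
      unfolding e_def by auto
    then have "ip D (X (K+q)) (X (K+p)) = ip D (y q) (y p) + ip D (y q) (e p) + (ip D (e q) (y p) + ip D (e q) (e p))"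
      by (simp add: ip_add_left ip_add_right)
    then show ?thesis using e_y y_e by simp
  qed
  have VV: "ip D (V q) (V p) = ip D (y q) (y p)" for p q
  proof -
    have "ip D (V q) (V p) = (\<Sum>k<K. cc q k * (\<Sum>k'<K. cnj (cc p k') * ip D (X (k+m)) (X (k'+m))))"
      unfolding V_def ip_sum_left ip_sum_right ip_scale_left ip_scale_right by (simp add: sum_distrib_left)
    also have "\<dots> = (\<Sum>k<K. cc q k * (\<Sum>k'<K. cnj (cc p k') * ip D (X k) (X k')))"
      using shift by (intro sum.cong refl) simp
    also have "\<dots> = ip D (y q) (y p)"
      unfolding y_def ip_sum_left ip_sum_right ip_scale_left ip_scale_right by (simp add: sum_distrib_left)
    finally show ?thesis .
  qed
  have VX: "ip D (V q) (X (j+m)) = ip D (y q) (X j)" if "j < K" for q j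
  proof -
    have "ip D (V q) (X (j+m)) = (\<Sum>k<K. cc q k * ip D (X (k+m)) (X (j+m)))"
      unfolding V_def ip_sum_left ip_scale_left ..
    also have "\<dots> = (\<Sum>k<K. cc q k * ip D (X k) (X j))"
      using shift that by (intro sum.cong refl) simp
    also have "\<dots> = ip D (y q) (X j)"
      unfolding y_def ip_sum_left ip_scale_left ..
    finally show ?thesis .
  qed
  have XV: "ip D (X (j+m)) (V p) = ip D (X j) (y p)" if "j < K" for p j
    using VX[OF that, of p] by (metis ip_conj)
  define Z where "Z = (\<lambda>r t. if r < N*m then (if t < D then X r t else 0)
      else (if t < D then V (r - N*m) t else e (r - N*m) (t - D)))"
  have Zlo: "ip D (Z c) (Z r) = ip D (if c < N*m then X c else V (c - N*m)) (if r < N*m then X r else V (r - N*m))" for r c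
    unfolding Z_def by (rule ip_cong) auto
  have Zhi: "ip D (\<lambda>t. Z c (t+D)) (\<lambda>t. Z r (t+D)) =
     (if c < N*m \<or> r < N*m then 0 else ip D (e (c - N*m)) (e (r - N*m)))" for r c
  proof (cases "c < N*m \<or> r < N*m")
    case True
    then show ?thesis
    proof
      assume "c < N*m"
      then have "ip D (\<lambda>t. Z c (t+D)) (\<lambda>t. Z r (t+D)) = ip D (\<lambda>t. 0) (\<lambda>t. Z r (t+D))"
        unfolding Z_def by (intro ip_cong) auto
      then show ?thesis using \<open>c < N*m\<close> by (simp add: ip_zero_fun_left)
    next
      assume "r < N*m"
      then have "ip D (\<lambda>t. Z c (t+D)) (\<lambda>t. Z r (t+D)) = ip D (\<lambda>t. Z c (t+D)) (\<lambda>t. 0)"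
        unfolding Z_def by (intro ip_cong) auto
      then show ?thesis using \<open>r < N*m\<close> by (simp add: ip_zero_fun_right)
    qed
  next
    case False
    then show ?thesis unfolding Z_def by (auto intro!: ip_cong)
  qed
  have Zip: "ip (2*D) (Z c) (Z r) = ip D (if c < N*m then X c else V (c - N*m)) (if r < N*m then X r else V (r - N*m))
      + (if c < N*m \<or> r < N*m then 0 else ip D (e (c - N*m)) (e (r - N*m)))" for r c
    unfolding ip_split Zlo Zhi ..
  define \<tau>'' where "\<tau>'' = (\<lambda>k. if k = int N then (\<lambda>p q. ip (2*D) (Z q) (Z (N*m+p)))
     else if k = - int N then (\<lambda>p q. ip (2*D) (Z (N*m+q)) (Z p)) else \<tau> k)"
  have agree: "\<forall>k. \<bar>k\<bar> < int N \<longrightarrow> \<tau>'' k = \<tau> k" unfolding \<tau>''_def by auto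
  have "gram m (Suc N) \<tau>'' (2*D) Z"
    unfolding gram_def
  proof (intro allI impI)
    fix r c assume r: "r < Suc N * m" and c: "c < Suc N * m"
    obtain i p where rip: "r = i * m + p" "p < m" "i \<le> N" using decomp_idx[OF m r] .
    obtain j q where cjq: "c = j * m + q" "q < m" "j \<le> N" using decomp_idx[OF m c] .
    have bt: "block_toeplitz m \<tau>'' r c = \<tau>'' (int i - int j) p q"
      unfolding bt_eq rip cjq using rip cjq m by simp
    have rlt: "r < N*m \<longleftrightarrow> i < N" unfolding rip using rip(2) m
      by (metis add.commute div_less_iff_less_mult div_mult_self1 div_less add_0 less_not_refl2 m)
    have clt: "c < N*m \<longleftrightarrow> j < N" unfolding cjq using cjq(2) m
      by (metis add.commute div_less_iff_less_mult div_mult_self1 div_less add_0 less_not_refl2 m)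
    have Kp: "K + p = (N - 1) * m + p" "K + q = (N - 1) * m + q" unfolding K_def by simp_all
    have NN: "int (N - 1) = int N - 1" using N by simp
    have Kq: "K + q < N*m" "K + p < N*m" using KN rip(2) cjq(2) by linarith+
    show "block_toeplitz m \<tau>'' r c = ip (2 * D) (Z c) (Z r)"
      unfolding bt Zip
    proof (cases "i < N")
      case iN: True
      show "\<tau>'' (int i - int j) p q = ip D (if c < N * m then X c else V (c - N * m)) (if r < N * m then X r else V (r - N * m)) +
    (if c < N * m \<or> r < N * m then 0 else ip D (e (c - N * m)) (e (r - N * m)))"
      proof (cases "j < N")
        case jN: True
        have "\<tau>'' (int i - int j) = \<tau> (int i - int j)" using agree iN jN by auto
        moreover have "ip D (X c) (X r) = \<tau> (int i - int j) p q"
          using GX[of r c] rlt clt iN jN unfolding bt_eq rip cjq using rip cjq m by simp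
        ultimately show ?thesis using rlt clt iN jN by simp
      next
        case False
        then have jN: "j = N" using cjq by simp
        have cN: "c - N*m = q" unfolding cjq jN by simp
        show ?thesis
        proof (cases "i = 0")
          case True
          have "\<tau>'' (int i - int j) p q = ip (2*D) (Z c) (Z r)"
            unfolding \<tau>''_def using True jN rip cjq N by simp
          then show ?thesis unfolding Zip .
        next
          case False
          define r' where "r' = (i - 1) * m + p"
          have r': "r = r' + m" unfolding r'_def rip using False by (cases i) auto
          have r'K: "r' < K"
          proof -
            have "r' < (i-1)*m + m" unfolding r'_def using rip(2) by simp
            also have "\<dots> = i*m" using False by (cases i) auto
            also have "\<dots> \<le> (N-1)*m" using iN by (intro mult_right_mono) auto
            finally show ?thesis unfolding K_def .
          qed
          have "ip D (V q) (X r) = ip D (X (K+q)) (X r')"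
            unfolding r' using VX[OF r'K] yX[OF r'K] by simp
          also have "\<dots> = \<tau> (int (i - 1) - int (N - 1)) p q"
            using GX[of r' "K+q"] r'K KN Kq unfolding bt_eq Kp r'_def using rip cjq m by simp
          also have "\<dots> = \<tau>'' (int i - int j) p q"
            unfolding \<tau>''_def jN using False N iN by (simp add: of_nat_diff)
          finally show ?thesis using rlt clt iN jN cN by simp
        qed
      qed
    next
      case False
      then have iN: "i = N" using rip by simp
      have rN: "r - N*m = p" unfolding rip iN by simp
      show "\<tau>'' (int i - int j) p q = ip D (if c < N * m then X c else V (c - N * m)) (if r < N * m then X r else V (r - N * m)) +
    (if c < N * m \<or> r < N * m then 0 else ip D (e (c - N * m)) (e (r - N * m)))"
      proof (cases "j < N")
        case jN: True
        show ?thesis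
        proof (cases "j = 0")
          case True
          have "\<tau>'' (int i - int j) p q = ip (2*D) (Z c) (Z r)"
            unfolding \<tau>''_def using True iN rip cjq N by simp
          then show ?thesis unfolding Zip .
        next
          case False
          define c' where "c' = (j - 1) * m + q"
          have c': "c = c' + m" unfolding c'_def cjq using False by (cases j) auto
          have c'K: "c' < K"
          proof -
            have "c' < (j-1)*m + m" unfolding c'_def using cjq(2) by simp
            also have "\<dots> = j*m" using False by (cases j) auto
            also have "\<dots> \<le> (N-1)*m" using jN by (intro mult_right_mono) auto
            finally show ?thesis unfolding K_def .
          qed
          have "ip D (X c) (V p) = cnj (ip D (X (K+p)) (X c'))"
            unfolding c' using XV[OF c'K] yX[OF c'K] by (metis ip_conj)
          also have "\<dots> = ip D (X c') (X (K+p))" by (metis ip_conj)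
          also have "\<dots> = \<tau> (int (N - 1) - int (j - 1)) p q"
            using GX[of "K+p" c'] c'K KN Kq unfolding bt_eq Kp c'_def using rip cjq m by simp
          also have "\<dots> = \<tau>'' (int i - int j) p q"
            unfolding \<tau>''_def iN using False N jN by (simp add: of_nat_diff)
          finally show ?thesis using rlt clt iN jN rN by simp
        qed
      next
        case False
        then have jN: "j = N" using cjq by simp
        have cN: "c - N*m = q" unfolding cjq jN by simp
        have "ip D (V q) (V p) + ip D (e q) (e p) = ip D (X (K+q)) (X (K+p))"
          using VV yy by simp
        also have "\<dots> = \<tau> 0 p q"
          using GX[of "K+p" "K+q"] KN Kq rip cjq unfolding bt_eq Kp using m by simp
        also have "\<dots> = \<tau>'' (int i - int j) p q"
          unfolding \<tau>''_def iN jN using N by simp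
        finally show ?thesis using rlt clt iN jN rN cN by simp
      qed
    qed
  qed
  then show ?thesis using agree by blast
qed

lemma rou_sum:
  fixes M :: nat and k :: int
  assumes "0 < M"
  shows "(\<Sum>l<M. cis (of_int k * (2 * pi * real l / real M))) = (if int M dvd k then of_nat M else 0)"
proof (cases "int M dvd k")
  case True
  then obtain d where d: "k = int M * d" by blast
  have "cis (of_int k * (2 * pi * real l / real M)) = 1" for l
  proof -
    have "of_int k * (2 * pi * real l / real M) = 2 * pi * of_int (d * int l)"
      using assms unfolding d by (simp add: field_simps)
    then show ?thesis by (simp add: cis_multiple_2pi)
  qed
  then show ?thesis using True by simp
next
  case False
  define \<zeta> where "\<zeta> = cis (2 * pi * of_int k / real M)"
  have z1: "\<zeta> \<noteq> 1"
  proof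
    assume "\<zeta> = 1"
    then obtain n :: int where "2 * pi * of_int k / real M = of_int n * 2 * pi"
      by (auto simp: \<zeta>_def complex_eq_iff cos_one_2pi_int)
    with assms have "of_int k = real M * of_int n" by (simp add: field_simps)
    then have "k = int M * n" by (metis of_int_eq_iff of_int_mult of_int_of_nat_eq)
    then show False using False by simp
  qed
  have "(\<Sum>l<M. cis (of_int k * (2 * pi * real l / real M))) = (\<Sum>l<M. \<zeta> ^ l)"
    by (intro sum.cong refl) (simp add: \<zeta>_def Complex.DeMoivre mult_ac)
  also have "\<dots> = (\<zeta> ^ M - 1) / (\<zeta> - 1)" using z1 by (subst geometric_sum) auto
  also have "\<zeta> ^ M = 1"
  proof -
    have "\<zeta> ^ M = cis (2 * pi * of_int k)" unfolding \<zeta>_def Complex.DeMoivre using assms by simp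
    then show ?thesis by simp
  qed
  finally show ?thesis using False by simp
qed

lemma sum4_swap:
  "(\<Sum>p\<in>P. \<Sum>q\<in>Q. \<Sum>r\<in>R. \<Sum>c\<in>C. f p q r c) = (\<Sum>r\<in>R. \<Sum>c\<in>C. \<Sum>p\<in>P. \<Sum>q\<in>Q. f p q r c)"
proof -
  have "(\<Sum>p\<in>P. \<Sum>q\<in>Q. \<Sum>r\<in>R. \<Sum>c\<in>C. f p q r c) = (\<Sum>p\<in>P. \<Sum>r\<in>R. \<Sum>q\<in>Q. \<Sum>c\<in>C. f p q r c)"
    by (rule sum.cong[OF refl], rule sum.swap)
  also have "\<dots> = (\<Sum>r\<in>R. \<Sum>p\<in>P. \<Sum>q\<in>Q. \<Sum>c\<in>C. f p q r c)" by (rule sum.swap)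
  also have "\<dots> = (\<Sum>r\<in>R. \<Sum>p\<in>P. \<Sum>c\<in>C. \<Sum>q\<in>Q. f p q r c)"
    by (rule sum.cong[OF refl], rule sum.cong[OF refl], rule sum.swap)
  also have "\<dots> = (\<Sum>r\<in>R. \<Sum>c\<in>C. \<Sum>p\<in>P. \<Sum>q\<in>Q. f p q r c)"
    by (rule sum.cong[OF refl], rule sum.swap)
  finally show ?thesis .
qed

lemma sum_mod_delta:
  fixes f :: "nat \<Rightarrow> complex"
  assumes "0 < m"
  shows "(\<Sum>p<m. (if r mod m = p then g else 0) * f p) = g * f (r mod m)"
proof -
  have "(\<Sum>p<m. (if r mod m = p then g else 0) * f p) = (\<Sum>p<m. if r mod m = p then g * f p else 0)"
    by (intro sum.cong) auto
  also have "\<dots> = g * f (r mod m)" using assms by (simp add: sum.delta)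
  finally show ?thesis .
qed

definition Ax :: "nat \<Rightarrow> (int \<Rightarrow> cmat) \<Rightarrow> int \<Rightarrow> cmat" where
  "Ax n a k = (if k \<in> idx n then a k else (\<lambda>_ _. 0))"

definition Qf :: "nat \<Rightarrow> nat \<Rightarrow> nat \<Rightarrow> (int \<Rightarrow> cmat) \<Rightarrow> (nat \<Rightarrow> complex) \<Rightarrow> complex" where
  "Qf m N n a x = (\<Sum>r<N*m. \<Sum>c<N*m. cnj (x r) * Ax n a (int (c div m) - int (r div m)) (r mod m) (c mod m) * x c)"

lemma dvd_small_int: fixes d :: int assumes "int M dvd d" "\<bar>d\<bar> < int M" shows "d = 0"
  using assms dvd_imp_le_int by force

lemma qf_u:
  fixes F :: cmat and x :: "nat \<Rightarrow> complex" and \<theta> :: real and L :: nat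
  assumes m: "0 < m"
  defines "u \<equiv> (\<lambda>p. \<Sum>r<L. if r mod m = p then x r * cis (- (real (r div m) * \<theta>)) else 0)"
  shows "qf m F u = (\<Sum>r<L. \<Sum>c<L. cnj (x r) * x c * cis (real (r div m) * \<theta> - real (c div m) * \<theta>) * F (r mod m) (c mod m))"
proof -
  have cu: "cnj (u p) = (\<Sum>r<L. if r mod m = p then cnj (x r) * cis (real (r div m) * \<theta>) else 0)" for p
    unfolding u_def cnj_sum by (intro sum.cong refl) (simp add: cis_cnj)
  have "qf m F u = (\<Sum>p<m. \<Sum>q<m. \<Sum>c<L. \<Sum>r<L.
      (if r mod m = p then cnj (x r) * cis (real (r div m) * \<theta>) else 0) * F p q *
      (if c mod m = q then x c * cis (- (real (c div m) * \<theta>)) else 0))"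
    unfolding qf_def cu unfolding u_def by (simp add: sum_distrib_left sum_distrib_right)
  also have "\<dots> = (\<Sum>c<L. \<Sum>r<L. \<Sum>p<m. \<Sum>q<m.
      (if r mod m = p then cnj (x r) * cis (real (r div m) * \<theta>) else 0) * F p q *
      (if c mod m = q then x c * cis (- (real (c div m) * \<theta>)) else 0))"
    by (rule sum4_swap)
  also have "\<dots> = (\<Sum>c<L. \<Sum>r<L. cnj (x r) * cis (real (r div m) * \<theta>) * F (r mod m) (c mod m) *
      (x c * cis (- (real (c div m) * \<theta>))))"
  proof (intro sum.cong refl)
    fix c r
    have "(\<Sum>q<m. (if r mod m = p then cnj (x r) * cis (real (r div m) * \<theta>) else 0) * F p q *
      (if c mod m = q then x c * cis (- (real (c div m) * \<theta>)) else 0)) =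
      (if r mod m = p then cnj (x r) * cis (real (r div m) * \<theta>) else 0) * F p (c mod m) *
      (x c * cis (- (real (c div m) * \<theta>)))" for p
      using sum_mod_delta[OF m, of c "x c * cis (- (real (c div m) * \<theta>))"
          "\<lambda>q. (if r mod m = p then cnj (x r) * cis (real (r div m) * \<theta>) else 0) * F p q"]
      by (simp add: mult_ac)
    then have "(\<Sum>p<m. \<Sum>q<m. (if r mod m = p then cnj (x r) * cis (real (r div m) * \<theta>) else 0) * F p q *
      (if c mod m = q then x c * cis (- (real (c div m) * \<theta>)) else 0)) =
      (\<Sum>p<m. (if r mod m = p then cnj (x r) * cis (real (r div m) * \<theta>) else 0) * (F p (c mod m) *
      (x c * cis (- (real (c div m) * \<theta>)))))" by (simp add: mult.assoc)
    also have "\<dots> = cnj (x r) * cis (real (r div m) * \<theta>) * (F (r mod m) (c mod m) *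
      (x c * cis (- (real (c div m) * \<theta>))))"
      by (rule sum_mod_delta[OF m])
    finally show "(\<Sum>p<m. \<Sum>q<m. (if r mod m = p then cnj (x r) * cis (real (r div m) * \<theta>) else 0) * F p q *
      (if c mod m = q then x c * cis (- (real (c div m) * \<theta>)) else 0)) =
      cnj (x r) * cis (real (r div m) * \<theta>) * F (r mod m) (c mod m) * (x c * cis (- (real (c div m) * \<theta>)))"
      by (simp add: mult.assoc)
  qed
  also have "\<dots> = (\<Sum>r<L. \<Sum>c<L. cnj (x r) * cis (real (r div m) * \<theta>) * F (r mod m) (c mod m) *
      (x c * cis (- (real (c div m) * \<theta>))))"
    by (rule sum.swap)
  also have "\<dots> = (\<Sum>r<L. \<Sum>c<L. cnj (x r) * x c * cis (real (r div m) * \<theta> - real (c div m) * \<theta>) * F (r mod m) (c mod m))"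
  proof (intro sum.cong refl)
    fix r c
    have "cis (real (r div m) * \<theta>) * cis (- (real (c div m) * \<theta>)) = cis (real (r div m) * \<theta> - real (c div m) * \<theta>)"
      by (simp add: cis_mult)
    then show "cnj (x r) * cis (real (r div m) * \<theta>) * F (r mod m) (c mod m) * (x c * cis (- (real (c div m) * \<theta>))) =
      cnj (x r) * x c * cis (real (r div m) * \<theta> - real (c div m) * \<theta>) * F (r mod m) (c mod m)"
      by (metis (no_types, lifting) mult.assoc mult.commute)
  qed
  finally show ?thesis .
qed

lemma finite_idx[simp]: "finite (idx n)" unfolding idx_def by simp

lemma quad_coef:
  fixes a :: "int \<Rightarrow> cmat" and M N n i j :: nat
  assumes M: "M = 2*N + 2*n + 1" and i: "i < N" and j: "j < N"
  shows "(\<Sum>l<M. cis (real i * (2*pi*real l/real M) - real j * (2*pi*real l/real M)) *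
            trig_poly n a (cis (2*pi*real l/real M)) p q) = of_nat M * Ax n a (int j - int i) p q"
proof -
  have Mpos: "0 < M" using M by simp
  have "(\<Sum>l<M. cis (real i * (2*pi*real l/real M) - real j * (2*pi*real l/real M)) *
            trig_poly n a (cis (2*pi*real l/real M)) p q) =
        (\<Sum>l<M. \<Sum>k\<in>idx n. a k p q * cis (of_int (k + int i - int j) * (2*pi*real l/real M)))"
  proof (intro sum.cong refl)
    fix l
    show "cis (real i * (2*pi*real l/real M) - real j * (2*pi*real l/real M)) *
            trig_poly n a (cis (2*pi*real l/real M)) p q =
          (\<Sum>k\<in>idx n. a k p q * cis (of_int (k + int i - int j) * (2*pi*real l/real M)))"
      unfolding trig_poly_def sum_distrib_left
    proof (intro sum.cong refl)
      fix k
      have "cis (real i * (2*pi*real l/real M) - real j * (2*pi*real l/real M)) *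
            cis (of_int k * (2*pi*real l/real M)) = cis (of_int (k + int i - int j) * (2*pi*real l/real M))"
        unfolding cis_mult by (simp add: algebra_simps add_divide_distrib diff_divide_distrib)
      then show "cis (real i * (2*pi*real l/real M) - real j * (2*pi*real l/real M)) *
            (a k p q * cis (2*pi*real l/real M) powi k) =
            a k p q * cis (of_int (k + int i - int j) * (2*pi*real l/real M))"
        by (simp add: cis_power_int mult_ac)
    qed
  qed
  also have "\<dots> = (\<Sum>k\<in>idx n. a k p q * (\<Sum>l<M. cis (of_int (k + int i - int j) * (2*pi*real l/real M))))"
    by (subst sum.swap) (simp add: sum_distrib_left)
  also have "\<dots> = (\<Sum>k\<in>idx n. a k p q * (if k = int j - int i then of_nat M else 0))"
  proof (intro sum.cong refl)
    fix k assume k: "k \<in> idx n"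
    have "int M dvd (k + int i - int j) \<longleftrightarrow> k = int j - int i"
    proof
      assume d: "int M dvd (k + int i - int j)"
      have "\<bar>k + int i - int j\<bar> < int M" using k i j M unfolding idx_def by auto
      then show "k = int j - int i" using dvd_small_int[OF d] by simp
    qed simp
    then show "a k p q * (\<Sum>l<M. cis (of_int (k + int i - int j) * (2*pi*real l/real M))) =
        a k p q * (if k = int j - int i then of_nat M else 0)"
      unfolding rou_sum[OF Mpos] by simp
  qed
  also have "\<dots> = of_nat M * Ax n a (int j - int i) p q"
    unfolding Ax_def by (simp add: if_distrib[of "\<lambda>x. _ * x"] sum.delta mult.commute cong: if_cong)
  finally show ?thesis .
qed

lemma Qf_nonneg:
  assumes m: "0 < m" and F: "\<forall>z. cmod z = 1 \<longrightarrow> psd m (trig_poly n a z)"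
  shows "Im (Qf m N n a x) = 0 \<and> 0 \<le> Re (Qf m N n a x)"
proof -
  define M where "M = 2*N + 2*n + 1"
  define \<theta> where "\<theta> = (\<lambda>l::nat. 2*pi*real l/real M)"
  define Fl where "Fl = (\<lambda>l. trig_poly n a (cis (\<theta> l)))"
  define u where "u = (\<lambda>l p. \<Sum>r<N*m. if r mod m = p then x r * cis (- (real (r div m) * \<theta> l)) else 0)"
  have psdl: "psd m (Fl l)" for l unfolding Fl_def using F by simp
  have q: "qf m (Fl l) (u l) = (\<Sum>r<N*m. \<Sum>c<N*m. cnj (x r) * x c *
      cis (real (r div m) * \<theta> l - real (c div m) * \<theta> l) * Fl l (r mod m) (c mod m))" for l
    unfolding u_def by (rule qf_u[OF m])
  have B: "(\<Sum>l<M. cis (real (r div m) * \<theta> l - real (c div m) * \<theta> l) * Fl l p q) =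
      of_nat M * Ax n a (int (c div m) - int (r div m)) p q" if "r < N*m" "c < N*m" for r c p q
    unfolding \<theta>_def Fl_def
    by (rule quad_coef[OF M_def]) (use that m in \<open>simp_all add: div_less_iff_less_mult\<close>)
  have "(\<Sum>l<M. qf m (Fl l) (u l)) = (\<Sum>l<M. \<Sum>r<N*m. \<Sum>c<N*m. cnj (x r) * x c *
      (cis (real (r div m) * \<theta> l - real (c div m) * \<theta> l) * Fl l (r mod m) (c mod m)))"
    unfolding q by (simp add: mult.assoc)
  also have "\<dots> = (\<Sum>r<N*m. \<Sum>c<N*m. \<Sum>l<M. cnj (x r) * x c *
      (cis (real (r div m) * \<theta> l - real (c div m) * \<theta> l) * Fl l (r mod m) (c mod m)))"
    by (subst sum.swap) (rule sum.cong[OF refl], rule sum.swap)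
  also have "\<dots> = (\<Sum>r<N*m. \<Sum>c<N*m. cnj (x r) * x c * (of_nat M * Ax n a (int (c div m) - int (r div m)) (r mod m) (c mod m)))"
    by (intro sum.cong refl) (simp add: sum_distrib_left[symmetric] B)
  also have "\<dots> = of_nat M * Qf m N n a x"
    unfolding Qf_def by (simp add: sum_distrib_left mult_ac)
  finally have eq: "of_nat M * Qf m N n a x = (\<Sum>l<M. qf m (Fl l) (u l))" ..
  have "Im (\<Sum>l<M. qf m (Fl l) (u l)) = 0" "0 \<le> Re (\<Sum>l<M. qf m (Fl l) (u l))"
    using psdl unfolding psd_iff by (auto simp: Im_sum Re_sum intro: sum_nonneg)
  then have "Im (of_nat M * Qf m N n a x) = 0" "0 \<le> Re (of_nat M * Qf m N n a x)" unfolding eq by auto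
  moreover have "0 < M" unfolding M_def by simp
  ultimately show ?thesis by (simp add: zero_le_mult_iff)
qed

definition Wsum :: "nat \<Rightarrow> nat \<Rightarrow> nat \<Rightarrow> (int \<Rightarrow> cmat) \<Rightarrow> (int \<Rightarrow> cmat) \<Rightarrow> complex" where
  "Wsum m N n \<tau> a = (\<Sum>r<N*m. \<Sum>c<N*m. \<tau> (int (r div m) - int (c div m)) (r mod m) (c mod m) *
      Ax n a (int (c div m) - int (r div m)) (r mod m) (c mod m))"

lemma idx_uminus: "k \<in> idx n \<Longrightarrow> - k \<in> idx n" unfolding idx_def by auto

lemma W_nonneg:
  assumes m: "0 < m" and F: "\<forall>z. cmod z = 1 \<longrightarrow> psd m (trig_poly n a z)"
    and G: "gram m N \<tau>' D X" and ag: "\<forall>k\<in>idx n. \<tau>' k = \<tau> k"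
  shows "Im (Wsum m N n \<tau> a) = 0 \<and> 0 \<le> Re (Wsum m N n \<tau> a)"
proof -
  have "Wsum m N n \<tau> a = (\<Sum>r<N*m. \<Sum>c<N*m. ip D (X c) (X r) *
      Ax n a (int (c div m) - int (r div m)) (r mod m) (c mod m))"
    unfolding Wsum_def
  proof (intro sum.cong refl)
    fix r c assume "r \<in> {..<N*m}" "c \<in> {..<N*m}"
    then have g: "ip D (X c) (X r) = \<tau>' (int (r div m) - int (c div m)) (r mod m) (c mod m)"
      using G unfolding gram_def bt_eq by simp
    show "\<tau> (int (r div m) - int (c div m)) (r mod m) (c mod m) * Ax n a (int (c div m) - int (r div m)) (r mod m) (c mod m) =
          ip D (X c) (X r) * Ax n a (int (c div m) - int (r div m)) (r mod m) (c mod m)"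
    proof (cases "int (c div m) - int (r div m) \<in> idx n")
      case True
      then have "int (r div m) - int (c div m) \<in> idx n" using idx_uminus by fastforce
      then show ?thesis unfolding g using ag by simp
    next
      case False
      then show ?thesis unfolding Ax_def by simp
    qed
  qed
  also have "\<dots> = (\<Sum>r<N*m. \<Sum>c<N*m. \<Sum>t<D. cnj (X r t) * Ax n a (int (c div m) - int (r div m)) (r mod m) (c mod m) * X c t)"
    unfolding ip_def by (simp add: sum_distrib_right mult_ac)
  also have "\<dots> = (\<Sum>t<D. Qf m N n a (\<lambda>r. X r t))"
    unfolding Qf_def by (subst sum.swap) (subst sum.swap, rule refl)
  finally have eq: "Wsum m N n \<tau> a = (\<Sum>t<D. Qf m N n a (\<lambda>r. X r t))" .
  show ?thesis unfolding eq using Qf_nonneg[OF m F]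
    by (auto simp: Im_sum Re_sum intro: sum_nonneg)
qed

lemma gram_all:
  assumes m: "0 < m" and n: "1 \<le> n" and T: "psd (n*m) (block_toeplitz m \<tau>)" and N: "n \<le> N"
  shows "\<exists>\<tau>' D X. (\<forall>k\<in>idx n. \<tau>' k = \<tau> k) \<and> gram m N \<tau>' D X"
  using N
proof (induction N rule: dec_induct)
  case base
  obtain X where "\<forall>i<n*m. \<forall>j<n*m. block_toeplitz m \<tau> i j = ip (n*m) (X j) (X i)"
    using psd_gram[OF T] by blast
  then have "gram m n \<tau> (n*m) X" unfolding gram_def by blast
  then show ?case by blast
next
  case (step N)
  then obtain \<tau>' D X where ag: "\<forall>k\<in>idx n. \<tau>' k = \<tau> k" and G: "gram m N \<tau>' D X" by blast
  obtain \<tau>'' D' Z where ag2: "\<forall>k. \<bar>k\<bar> < int N \<longrightarrow> \<tau>'' k = \<tau>' k" and G2: "gram m (Suc N) \<tau>'' D' Z"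
    using extend[OF m _ G] step n by auto
  have "\<forall>k\<in>idx n. \<tau>'' k = \<tau> k"
  proof
    fix k assume k: "k \<in> idx n"
    then have "\<bar>k\<bar> < int N" using step unfolding idx_def by auto
    then show "\<tau>'' k = \<tau> k" using ag2 ag k by simp
  qed
  then show ?case using G2 by blast
qed

lemma sum_block1: fixes i m :: nat shows "sum f {i*m..<i*m+m} = (\<Sum>p<m. f (i*m + p))"
proof -
  have "sum f {0 + i*m..<m + i*m} = (\<Sum>p\<in>{0..<m}. f (p + i*m))" by (rule sum.shift_bounds_nat_ivl)
  then show ?thesis by (simp add: lessThan_atLeast0 add.commute)
qed

lemma sum_blocks: fixes N m :: nat shows "(\<Sum>r<N*m. f r) = (\<Sum>i<N. \<Sum>p<m. f (i*m + p))"
  using sum.nat_group[of f m N] sum_block1[of f] by simp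

lemma W_blocks:
  assumes m: "0 < m"
  shows "Wsum m N n \<tau> a = (\<Sum>p<m. \<Sum>q<m. \<Sum>i<N. \<Sum>j<N. \<tau> (int i - int j) p q * Ax n a (- (int i - int j)) p q)"
proof -
  have "Wsum m N n \<tau> a = (\<Sum>i<N. \<Sum>p<m. \<Sum>j<N. \<Sum>q<m. \<tau> (int i - int j) p q * Ax n a (- (int i - int j)) p q)"
    unfolding Wsum_def sum_blocks
    by (intro sum.cong refl) (use m in simp)
  also have "\<dots> = (\<Sum>i<N. \<Sum>j<N. \<Sum>p<m. \<Sum>q<m. \<tau> (int i - int j) p q * Ax n a (- (int i - int j)) p q)"
    by (rule sum.cong[OF refl], rule sum.swap)
  also have "\<dots> = (\<Sum>p<m. \<Sum>q<m. \<Sum>i<N. \<Sum>j<N. \<tau> (int i - int j) p q * Ax n a (- (int i - int j)) p q)"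
    by (rule sum4_swap)
  finally show ?thesis .
qed

lemma sym_interval:
  fixes \<phi> :: "int \<Rightarrow> complex"
  shows "(\<Sum>d\<in>{-int N..int N}. \<phi> d) = \<phi> 0 + (\<Sum>i<N. \<phi> (int i + 1) + \<phi> (-(int i + 1)))"
proof (induction N)
  case 0
  then show ?case by simp
next
  case (Suc N)
  have e: "{-int (Suc N)..int (Suc N)} = insert (int N + 1) (insert (-(int N + 1)) {-int N..int N})" by auto
  show ?case unfolding e using Suc by (simp add: algebra_simps)
qed

lemma incr1:
  fixes \<phi> :: "int \<Rightarrow> complex"
  assumes z: "\<forall>d. d \<notin> idx n \<longrightarrow> \<phi> d = 0" and N: "n \<le> N"
  shows "(\<Sum>i<Suc N. \<Sum>j<Suc N. \<phi> (int i - int j)) = (\<Sum>i<N. \<Sum>j<N. \<phi> (int i - int j)) + (\<Sum>d\<in>idx n. \<phi> d)"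
proof -
  have "(\<Sum>i<Suc N. \<Sum>j<Suc N. \<phi> (int i - int j)) =
     (\<Sum>i<N. \<Sum>j<N. \<phi> (int i - int j)) + (\<Sum>i<N. \<phi> (int i - int N)) + (\<Sum>j<N. \<phi> (int N - int j)) + \<phi> 0"
    by (simp add: sum.distrib)
  also have "(\<Sum>i<N. \<phi> (int i - int N)) = (\<Sum>i<N. \<phi> (-(int i + 1)))"
  proof -
    have "(\<Sum>i<N. \<phi> (int i - int N)) = (\<Sum>i<N. \<phi> (int (N - Suc i) - int N))"
      by (rule sum.nat_diff_reindex[symmetric])
    also have "\<dots> = (\<Sum>i<N. \<phi> (-(int i + 1)))" by (intro sum.cong refl) (simp add: of_nat_diff algebra_simps)
    finally show ?thesis .
  qed
  also have "(\<Sum>j<N. \<phi> (int N - int j)) = (\<Sum>i<N. \<phi> (int i + 1))"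
  proof -
    have "(\<Sum>j<N. \<phi> (int N - int j)) = (\<Sum>i<N. \<phi> (int N - int (N - Suc i)))"
      by (rule sum.nat_diff_reindex[symmetric])
    also have "\<dots> = (\<Sum>i<N. \<phi> (int i + 1))" by (intro sum.cong refl) (simp add: of_nat_diff algebra_simps)
    finally show ?thesis .
  qed
  also have "(\<Sum>d\<in>idx n. \<phi> d) = (\<Sum>d\<in>{-int N..int N}. \<phi> d)"
    by (rule sum.mono_neutral_left) (use z N in \<open>auto simp: idx_def\<close>)
  ultimately show ?thesis unfolding sym_interval by (simp add: sum.distrib algebra_simps)
qed

definition Ssum :: "nat \<Rightarrow> nat \<Rightarrow> (int \<Rightarrow> cmat) \<Rightarrow> (int \<Rightarrow> cmat) \<Rightarrow> complex" where
  "Ssum m n \<tau> a = (\<Sum>p<m. \<Sum>q<m. \<Sum>k\<in>idx n. \<tau> (-k) p q * a k p q)"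

lemma W_incr:
  assumes m: "0 < m" and N: "n \<le> N"
  shows "Wsum m (Suc N) n \<tau> a = Wsum m N n \<tau> a + Ssum m n \<tau> a"
proof -
  have pq: "(\<Sum>i<Suc N. \<Sum>j<Suc N. \<tau> (int i - int j) p q * Ax n a (- (int i - int j)) p q) =
      (\<Sum>i<N. \<Sum>j<N. \<tau> (int i - int j) p q * Ax n a (- (int i - int j)) p q) +
      (\<Sum>k\<in>idx n. \<tau> (-k) p q * a k p q)" for p q
  proof -
    have z: "\<forall>d. d \<notin> idx n \<longrightarrow> \<tau> d p q * Ax n a (- d) p q = 0"
      unfolding Ax_def using idx_uminus by fastforce
    have "(\<Sum>d\<in>idx n. \<tau> d p q * Ax n a (- d) p q) = (\<Sum>k\<in>idx n. \<tau> (-k) p q * a k p q)"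
      by (rule sum.reindex_bij_witness[of _ uminus uminus]) (auto simp: Ax_def idx_uminus)
    then show ?thesis using incr1[OF z N] by simp
  qed
  show ?thesis unfolding W_blocks[OF m] Ssum_def pq by (simp add: sum.distrib)
qed

lemma idx0: "idx 0 = {}" unfolding idx_def by simp

lemma S_nonneg:
  assumes T: "psd (n*m) (block_toeplitz m \<tau>)" and F: "\<forall>z. cmod z = 1 \<longrightarrow> psd m (trig_poly n a z)"
  shows "Im (Ssum m n \<tau> a) = 0 \<and> 0 \<le> Re (Ssum m n \<tau> a)"
proof (cases "m = 0 \<or> n = 0")
  case True
  then have "Ssum m n \<tau> a = 0" unfolding Ssum_def using idx0 by auto
  then show ?thesis by simp
next
  case False
  then have m: "0 < m" and n: "1 \<le> n" by auto
  have Wn: "Im (Wsum m N n \<tau> a) = 0 \<and> 0 \<le> Re (Wsum m N n \<tau> a)" if nN: "n \<le> N" for N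
  proof -
    obtain \<tau>' D X where "\<forall>k\<in>idx n. \<tau>' k = \<tau> k" "gram m N \<tau>' D X"
      using gram_all[OF m n T nN] by blast
    then show ?thesis using W_nonneg[OF m F] by blast
  qed
  have Wk: "Wsum m (n + k) n \<tau> a = Wsum m n n \<tau> a + of_nat k * Ssum m n \<tau> a" for k
  proof (induction k)
    case 0
    then show ?case by simp
  next
    case (Suc k)
    have "Wsum m (n + Suc k) n \<tau> a = Wsum m (n + k) n \<tau> a + Ssum m n \<tau> a"
      using W_incr[OF m, of n "n + k"] by simp
    then show ?case using Suc by (simp add: algebra_simps)
  qed
  have "Im (Ssum m n \<tau> a) = 0" using Wk[of 1] Wn[of n] Wn[of "n+1"] by simp
  moreover have "0 \<le> Re (Ssum m n \<tau> a)"
  proof (rule ccontr)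
    assume neg: "\<not> 0 \<le> Re (Ssum m n \<tau> a)"
    obtain k :: nat where k: "Re (Wsum m n n \<tau> a) / (- Re (Ssum m n \<tau> a)) < real k"
      using reals_Archimedean2 by blast
    have "Re (Wsum m n n \<tau> a) < real k * (- Re (Ssum m n \<tau> a))"
    proof -
      have "0 < - Re (Ssum m n \<tau> a)" using neg by simp
      then show ?thesis using k by (simp only: divide_less_eq)
    qed
    moreover have "0 \<le> Re (Wsum m n n \<tau> a) + real k * Re (Ssum m n \<tau> a)"
      using Wn[of "n + k"] Wk[of k] by simp
    ultimately show False by simp
  qed
  ultimately show ?thesis by simp
qed

lemma psd_scale:
  assumes "psd m A"
  shows "psd m (\<lambda>p q. cnj (v p) * A p q * v q)"
proof (rule psd_of_forms, intro allI)
  fix w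
  have "qf m (\<lambda>p q. cnj (v p) * A p q * v q) w = qf m A (\<lambda>p. v p * w p)"
    unfolding qf_def by (intro sum.cong refl) (simp add: mult_ac)
  then show "Im (qf m (\<lambda>p q. cnj (v p) * A p q * v q) w) = 0 \<and> 0 \<le> Re (qf m (\<lambda>p q. cnj (v p) * A p q * v q) w)"
    using assms unfolding psd_iff by simp
qed

lemma forward:
  assumes T: "psd (n*m) (block_toeplitz m \<tau>)" and F: "\<forall>z. cmod z = 1 \<longrightarrow> psd m (trig_poly n a z)"
  shows "psd m (\<lambda>i j. \<Sum>k\<in>idx n. schur (\<tau> (- k)) (a k) i j)"
proof (rule psd_of_forms, intro allI)
  fix v
  define av where "av = (\<lambda>k p q. cnj (v p) * a k p q * v q)"
  have Fv: "\<forall>z. cmod z = 1 \<longrightarrow> psd m (trig_poly n av z)"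
  proof (intro allI impI)
    fix z :: complex assume "cmod z = 1"
    then have "psd m (\<lambda>p q. cnj (v p) * trig_poly n a z p q * v q)" using F psd_scale by blast
    moreover have "trig_poly n av z = (\<lambda>p q. cnj (v p) * trig_poly n a z p q * v q)"
      unfolding trig_poly_def av_def by (simp add: sum_distrib_left sum_distrib_right mult_ac)
    ultimately show "psd m (trig_poly n av z)" by simp
  qed
  have "qf m (\<lambda>i j. \<Sum>k\<in>idx n. schur (\<tau> (- k)) (a k) i j) v = Ssum m n \<tau> av"
    unfolding qf_def Ssum_def schur_def av_def by (simp add: sum_distrib_left sum_distrib_right mult_ac)
  then show "Im (qf m (\<lambda>i j. \<Sum>k\<in>idx n. schur (\<tau> (- k)) (a k) i j) v) = 0 \<and>
      0 \<le> Re (qf m (\<lambda>i j. \<Sum>k\<in>idx n. schur (\<tau> (- k)) (a k) i j) v)"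
    using S_nonneg[OF T Fv] by simp
qed

lemma backward:
  assumes H: "\<forall>a :: int \<Rightarrow> nat \<Rightarrow> nat \<Rightarrow> complex.
       (\<forall>z. cmod z = 1 \<longrightarrow> psd m (trig_poly n a z)) \<longrightarrow>
       psd m (\<lambda>i j. \<Sum>k\<in>idx n. schur (\<tau> (- k)) (a k) i j)"
  shows "psd (n*m) (block_toeplitz m \<tau>)"
proof (cases "m = 0")
  case True
  then show ?thesis unfolding psd_def by simp
next
  case False
  then have m: "0 < m" by simp
  show ?thesis
  proof (rule psd_of_forms, intro allI)
    fix x
    define E where "E = (\<lambda>i j p q. cnj (x (i*m+p)) * x (j*m+q))"
    define a where "a = (\<lambda>k p q. \<Sum>i<n. \<Sum>j<n. if int j - int i = k then E i j p q else 0)"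
    have ij_idx: "int j - int i \<in> idx n" if "i < n" "j < n" for i j
      using that unfolding idx_def by auto
    have coll: "(\<Sum>k\<in>idx n. \<Sum>i<n. \<Sum>j<n. if int j - int i = k then g i j k else 0) =
        (\<Sum>i<n. \<Sum>j<n. g i j (int j - int i))" for g :: "nat \<Rightarrow> nat \<Rightarrow> int \<Rightarrow> complex"
    proof -
      have "(\<Sum>k\<in>idx n. \<Sum>i<n. \<Sum>j<n. if int j - int i = k then g i j k else 0) =
          (\<Sum>i<n. \<Sum>j<n. \<Sum>k\<in>idx n. if int j - int i = k then g i j k else 0)"
        by (subst sum.swap) (rule sum.cong[OF refl], rule sum.swap)
      also have "\<dots> = (\<Sum>i<n. \<Sum>j<n. g i j (int j - int i))"
        by (intro sum.cong refl) (simp add: sum.delta ij_idx)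
      finally show ?thesis .
    qed
    have Fpsd: "\<forall>z. cmod z = 1 \<longrightarrow> psd m (trig_poly n a z)"
    proof (intro allI impI)
      fix z :: complex assume z: "cmod z = 1"
      have "z * cnj z = 1" using complex_norm_square[of z] z by simp
      then have zc: "cnj z = inverse z" by (metis inverse_unique)
      have z0: "z \<noteq> 0" using z by auto
      define U where "U = (\<lambda>p. \<Sum>i<n. x (i*m+p) * z ^ i)"
      have "trig_poly n a z p q = cnj (U p) * U q" for p q
      proof -
        have "trig_poly n a z p q = (\<Sum>k\<in>idx n. \<Sum>i<n. \<Sum>j<n. if int j - int i = k then E i j p q * z powi k else 0)"
          unfolding trig_poly_def a_def by (simp add: sum_distrib_right if_distrib[of "\<lambda>y. y * _"] cong: if_cong)
        also have "\<dots> = (\<Sum>i<n. \<Sum>j<n. E i j p q * z powi (int j - int i))"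
          by (rule coll)
        also have "\<dots> = (\<Sum>i<n. \<Sum>j<n. (cnj (x (i*m+p)) * cnj (z ^ i)) * (x (j*m+q) * z ^ j))"
        proof (intro sum.cong refl)
          fix i j
          have "z powi (int j - int i) = z ^ j * cnj (z ^ i)"
            using z0 by (simp add: power_int_diff zc power_inverse divide_inverse)
          then show "E i j p q * z powi (int j - int i) = (cnj (x (i*m+p)) * cnj (z ^ i)) * (x (j*m+q) * z ^ j)"
            unfolding E_def by (simp add: mult_ac)
        qed
        also have "\<dots> = cnj (U p) * U q"
          unfolding U_def cnj_sum by (simp add: sum_distrib_left sum_distrib_right) (rule sum.swap)
        finally show ?thesis .
      qed
      then have "\<forall>r<m. \<forall>c<m. trig_poly n a z r c = ip 1 (\<lambda>t. U c) (\<lambda>t. U r)"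
        unfolding ip_def by simp
      then show "psd m (trig_poly n a z)" by (rule gram_psd)
    qed
    have P: "psd m (\<lambda>i j. \<Sum>k\<in>idx n. schur (\<tau> (- k)) (a k) i j)" using H Fpsd by blast
    have "qf m (\<lambda>i j. \<Sum>k\<in>idx n. schur (\<tau> (- k)) (a k) i j) (\<lambda>_. 1) =
        (\<Sum>p<m. \<Sum>q<m. \<Sum>k\<in>idx n. \<Sum>i<n. \<Sum>j<n. if int j - int i = k then \<tau> (- k) p q * E i j p q else 0)"
      unfolding qf_def schur_def a_def by (simp add: sum_distrib_left if_distrib[of "\<lambda>y. _ * y"] cong: if_cong)
    also have "\<dots> = (\<Sum>p<m. \<Sum>q<m. \<Sum>i<n. \<Sum>j<n. \<tau> (int i - int j) p q * E i j p q)"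
      by (intro sum.cong refl) (simp add: coll)
    also have "\<dots> = (\<Sum>i<n. \<Sum>j<n. \<Sum>p<m. \<Sum>q<m. \<tau> (int i - int j) p q * E i j p q)"
      by (rule sum4_swap)
    also have "\<dots> = (\<Sum>i<n. \<Sum>p<m. \<Sum>j<n. \<Sum>q<m. \<tau> (int i - int j) p q * E i j p q)"
      by (rule sum.cong[OF refl], rule sum.swap)
    also have "\<dots> = qf (n*m) (block_toeplitz m \<tau>) x"
      unfolding qf_def sum_blocks E_def bt_eq using m by (intro sum.cong refl) (simp add: mult_ac)
    finally have "qf (n*m) (block_toeplitz m \<tau>) x = qf m (\<lambda>i j. \<Sum>k\<in>idx n. schur (\<tau> (- k)) (a k) i j) (\<lambda>_. 1)" ..
    then show "Im (qf (n*m) (block_toeplitz m \<tau>) x) = 0 \<and> 0 \<le> Re (qf (n*m) (block_toeplitz m \<tau>) x)"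
      using P unfolding psd_iff by simp
  qed
qed

theorem proposition6p1:
  fixes n m :: nat and \<tau> :: "int \<Rightarrow> nat \<Rightarrow> nat \<Rightarrow> complex"
  shows "psd (n * m) (block_toeplitz m \<tau>) \<longleftrightarrow>
    (\<forall>a :: int \<Rightarrow> nat \<Rightarrow> nat \<Rightarrow> complex.
       (\<forall>z. cmod z = 1 \<longrightarrow> psd m (trig_poly n a z)) \<longrightarrow>
       psd m (\<lambda>i j. \<Sum>k\<in>idx n. schur (\<tau> (- k)) (a k) i j))"
  using forward backward by blast

end
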